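(* Let $X$ be a Hausdorff space and $A\in\mathcal{F}(X)$. The following are equivalent: (a) $A$ is a $P$-point of $\mathcal{F}(X)$; (b) $A$ is a $P$-point of $\mathcal{F}_n(X)$ for each positive integer $n\geq|A|$; (c) every $x\in A$ is a $P$-point of $X$.
   Context: $\mathcal{F}(X)$ is the set of nonempty finite subsets of $X$ and $\mathcal{F}_n(X)$ the set of nonempty subsets with at most $n$ points, both with the Vietoris topology (generated by $U^+=\{A: A\subset U\}$ and $U^-=\{A: A\cap U\neq\emptyset\}$ for $U$ open in $X$). A point $p$ of a space $Z$ is a $P$-point if $p$ lies in the interior of every $G_\delta$ subset of $Z$ containing $p$. *)

theory Defs
  imports "HOL-Analysis.Analysis"
begin

definition vietoris_on :: "'a topology \<Rightarrow> 'a set set \<Rightarrow> 'a set topology" where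
  "vietoris_on X C = topology_generated_by
     ({{A \<in> C. A \<subseteq> U} | U. openin X U} \<union> {{A \<in> C. A \<inter> U \<noteq> {}} | U. openin X U})"

definition fin_hyperspace :: "'a topology \<Rightarrow> 'a set topology" where
  "fin_hyperspace X = vietoris_on X {A. A \<noteq> {} \<and> finite A \<and> A \<subseteq> topspace X}"

definition fin_hyperspace_n :: "'a topology \<Rightarrow> nat \<Rightarrow> 'a set topology" where
  "fin_hyperspace_n X n =
     vietoris_on X {A. A \<noteq> {} \<and> finite A \<and> card A \<le> n \<and> A \<subseteq> topspace X}"

definition P_point :: "'a topology \<Rightarrow> 'a \<Rightarrow> bool" where
  "P_point Z p \<longleftrightarrow> p \<in> topspace Z \<and>
     (\<forall>G. gdelta_in Z G \<and> p \<in> G \<longrightarrow> p \<in> Z interior_of G)"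

end

theory Submission
  imports Defs
begin

definition good :: "'a set \<Rightarrow> 'a set set \<Rightarrow> 'a set \<Rightarrow> bool" where
  "good A F B \<longleftrightarrow> (\<forall>U\<in>F. (A \<subseteq> U \<longrightarrow> B \<subseteq> U) \<and> (A \<inter> U \<noteq> {} \<longrightarrow> B \<inter> U \<noteq> {}))"

lemma vietoris_topspace:
  assumes "C \<subseteq> Pow (topspace X)"
  shows "topspace (vietoris_on X C) = C"
proof -
  let ?S1 = "{{A \<in> C. A \<subseteq> U} | U. openin X U}"
  let ?S2 = "{{A \<in> C. A \<inter> U \<noteq> {}} | U. openin X U}"
  have eq: "{A \<in> C. A \<subseteq> topspace X} = C" using assms by auto
  have "{A \<in> C. A \<subseteq> topspace X} \<in> ?S1"
    by (rule CollectI, rule exI[of _ "topspace X"], simp)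
  then have "C \<in> ?S1" unfolding eq .
  then have "C \<subseteq> \<Union>(?S1 \<union> ?S2)" by (rule Union_upper[OF UnI1])
  moreover have "\<Union>(?S1 \<union> ?S2) \<subseteq> C" by auto
  ultimately have "\<Union>(?S1 \<union> ?S2) = C" by (rule antisym[rotated])
  then show ?thesis unfolding vietoris_on_def topology_generated_by_topspace .
qed

lemma open_nbhd:
  assumes "openin (vietoris_on X C) W" "A \<in> W"
  shows "\<exists>F. finite F \<and> (\<forall>U\<in>F. openin X U) \<and> (\<forall>B\<in>C. good A F B \<longrightarrow> B \<in> W)"
proof -
  have "generate_topology_on
     ({{A \<in> C. A \<subseteq> U} | U. openin X U} \<union> {{A \<in> C. A \<inter> U \<noteq> {}} | U. openin X U}) W"
    using assms(1) unfolding vietoris_on_def openin_topology_generated_by_iff .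
  then show ?thesis using assms(2)
  proof (induction arbitrary: A)
    case Empty
    then show ?case by simp
  next
    case (Int a b)
    from Int.prems have "A \<in> a" "A \<in> b" by auto
    from Int.IH(1)[OF \<open>A \<in> a\<close>] obtain F1 where F1: "finite F1" "\<forall>U\<in>F1. openin X U"
      "\<forall>B\<in>C. good A F1 B \<longrightarrow> B \<in> a" by blast
    from Int.IH(2)[OF \<open>A \<in> b\<close>] obtain F2 where F2: "finite F2" "\<forall>U\<in>F2. openin X U"
      "\<forall>B\<in>C. good A F2 B \<longrightarrow> B \<in> b" by blast
    have "\<forall>B\<in>C. good A (F1 \<union> F2) B \<longrightarrow> B \<in> a \<inter> b"
      using F1(3) F2(3) by (simp add: good_def)
    then show ?case using F1 F2
      by (intro exI[of _ "F1 \<union> F2"]) auto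
  next
    case (UN K)
    then obtain k where "k \<in> K" "A \<in> k" by blast
    from UN.IH[OF this] obtain F where "finite F" "\<forall>U\<in>F. openin X U"
      "\<forall>B\<in>C. good A F B \<longrightarrow> B \<in> k" by blast
    then show ?case using \<open>k \<in> K\<close> by blast
  next
    case (Basis s)
    then consider U where "openin X U" "s = {A \<in> C. A \<subseteq> U}"
      | U where "openin X U" "s = {A \<in> C. A \<inter> U \<noteq> {}}" by blast
    then show ?case
    proof cases
      case 1
      then show ?thesis using Basis.prems
        by (intro exI[of _ "{U}"]) (auto simp: good_def)
    next
      case 2
      then show ?thesis using Basis.prems
        by (intro exI[of _ "{U}"]) (auto simp: good_def)
    qed
  qed
qed

lemma nbhd_open:
  assumes "finite F" "\<forall>U\<in>F. openin X U" "C \<subseteq> Pow (topspace X)"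
  shows "openin (vietoris_on X C) {B\<in>C. good A F B}"
  using assms(1,2)
proof (induction F rule: finite_induct)
  case empty
  have "{B\<in>C. good A {} B} = topspace (vietoris_on X C)"
    using vietoris_topspace[OF assms(3)] by (simp add: good_def)
  then show ?case by simp
next
  case (insert U F)
  define T1 where "T1 = (if A \<subseteq> U then {B\<in>C. B \<subseteq> U} else C)"
  define T2 where "T2 = (if A \<inter> U \<noteq> {} then {B\<in>C. B \<inter> U \<noteq> {}} else C)"
  have oU: "openin X U" using insert by simp
  have top: "openin (vietoris_on X C) C"
    using vietoris_topspace[OF assms(3)] by (metis openin_topspace)
  have b1: "openin (vietoris_on X C) {B\<in>C. B \<subseteq> U}"
    unfolding vietoris_on_def using oU by (intro topology_generated_by_Basis) blast
  have b2: "openin (vietoris_on X C) {B\<in>C. B \<inter> U \<noteq> {}}"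
    unfolding vietoris_on_def using oU by (intro topology_generated_by_Basis) blast
  have "openin (vietoris_on X C) T1" using top b1 by (simp add: T1_def)
  moreover have "openin (vietoris_on X C) T2" using top b2 by (simp add: T2_def)
  moreover have "{B\<in>C. good A (insert U F) B} = {B\<in>C. good A F B} \<inter> T1 \<inter> T2"
    by (auto simp: good_def T1_def T2_def)
  ultimately show ?case using insert by (simp add: openin_Int)
qed

lemma ppoint_from_points:
  assumes C: "C \<subseteq> Pow (topspace X)" and AC: "A \<in> C" and fA: "finite A" and pts: "\<forall>x\<in>A. P_point X x"
  shows "P_point (vietoris_on X C) A"
  unfolding P_point_def
proof (intro conjI allI impI)
  let ?Z = "vietoris_on X C"
  show "A \<in> topspace ?Z" using vietoris_topspace[OF C] AC by simp
  fix G assume GA: "gdelta_in ?Z G \<and> A \<in> G"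
  then have AG: "A \<in> G" by simp
  from GA have "\<exists>D. (\<forall>n. openin ?Z (D n)) \<and> (\<forall>n. D(Suc n) \<subseteq> D n) \<and> \<Inter>(range D) = G"
    using gdelta_in_descending by metis
  then obtain Gk where Gk0: "(\<forall>n. openin ?Z (Gk n)) \<and> (\<forall>n. Gk(Suc n) \<subseteq> Gk n) \<and> \<Inter>(range Gk) = G" ..
  have Gk: "\<And>n. openin ?Z (Gk n)" "\<Inter>(range Gk) = G" using Gk0 by simp_all
  have AGk: "A \<in> Gk n" for n using AG Gk(2) by auto
  have "\<forall>n. \<exists>F. finite F \<and> (\<forall>U\<in>F. openin X U) \<and> (\<forall>B\<in>C. good A F B \<longrightarrow> B \<in> Gk n)"
  proof
    fix n show "\<exists>F. finite F \<and> (\<forall>U\<in>F. openin X U) \<and> (\<forall>B\<in>C. good A F B \<longrightarrow> B \<in> Gk n)"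
      by (rule open_nbhd[OF Gk(1) AGk])
  qed
  then obtain F where F: "\<And>n. finite (F n)" "\<And>n. \<forall>U\<in>F n. openin X U"
    "\<And>n. \<forall>B\<in>C. good A (F n) B \<longrightarrow> B \<in> Gk n" by metis
  define \<U> where "\<U> = \<Union>(range F)"
  have cU: "countable \<U>" unfolding \<U>_def using F(1) by (simp add: countable_finite)
  define H where "H a = \<Inter>(insert (topspace X) {U\<in>\<U>. a \<in> U})" for a
  define Nb where "Nb a = X interior_of H a" for a
  have AX: "A \<subseteq> topspace X" using C AC by blast
  have aO: "a \<in> Nb a" if "a \<in> A" for a
  proof -
    have "gdelta_in X (H a)" unfolding H_def
    proof (rule gdelta_in_Inter)
      show "countable (insert (topspace X) {U \<in> \<U>. a \<in> U})" using cU
        by (simp add: countable_subset[of _ \<U>])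
    next
      fix S assume "S \<in> insert (topspace X) {U \<in> \<U>. a \<in> U}"
      then have "openin X S" using F(2) unfolding \<U>_def by auto
      then show "gdelta_in X S" by (rule open_imp_gdelta_in)
    qed simp
    moreover have "a \<in> H a" using that AX unfolding H_def by auto
    ultimately show ?thesis using pts that unfolding P_point_def Nb_def by blast
  qed
  have OU: "Nb a \<subseteq> U" if "U \<in> \<U>" "a \<in> U" for a U
    using interior_of_subset[of X "H a"] that unfolding Nb_def H_def by blast
  define F' where "F' = Nb ` A \<union> {\<Union>(Nb ` A)}"
  have "finite F'" unfolding F'_def using fA by simp
  moreover have "\<forall>U\<in>F'. openin X U" unfolding F'_def Nb_def by auto
  ultimately have oN: "openin ?Z {B\<in>C. good A F' B}" using nbhd_open C by blast
  have "A \<in> {B\<in>C. good A F' B}" using AC by (auto simp: good_def)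
  moreover have "{B\<in>C. good A F' B} \<subseteq> G"
  proof
    fix B assume B: "B \<in> {B\<in>C. good A F' B}"
    have gB: "good A F' B" using B by simp
    have inF: "\<Union>(Nb ` A) \<in> F'" unfolding F'_def by simp
    have AinU: "A \<subseteq> \<Union>(Nb ` A)" using aO by blast
    have Bsub: "B \<subseteq> \<Union>(Nb ` A)"
      using gB inF AinU unfolding good_def by blast
    have Bmeet: "B \<inter> Nb a \<noteq> {}" if "a \<in> A" for a
    proof -
      have "Nb a \<in> F'" unfolding F'_def using that by simp
      moreover have "A \<inter> Nb a \<noteq> {}" using aO that by blast
      ultimately show ?thesis using gB unfolding good_def by blast
    qed
    have "B \<in> Gk n" for n
    proof -
      have "good A (F n) B" unfolding good_def
      proof
        fix U assume U: "U \<in> F n"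
        then have "U \<in> \<U>" unfolding \<U>_def by blast
        show "(A \<subseteq> U \<longrightarrow> B \<subseteq> U) \<and> (A \<inter> U \<noteq> {} \<longrightarrow> B \<inter> U \<noteq> {})"
        proof (intro conjI impI)
          assume "A \<subseteq> U"
          then have "\<Union>(Nb ` A) \<subseteq> U" using OU \<open>U \<in> \<U>\<close> by blast
          then show "B \<subseteq> U" using Bsub by blast
        next
          assume "A \<inter> U \<noteq> {}"
          then obtain a where "a \<in> A" "a \<in> U" by blast
          then show "B \<inter> U \<noteq> {}" using Bmeet OU \<open>U \<in> \<U>\<close> by blast
        qed
      qed
      then show ?thesis using F(3) B by blast
    qed
    then show "B \<in> G" using Gk(2) by blast
  qed
  ultimately show "A \<in> ?Z interior_of G" using oN interior_of_maximal by blast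
qed


lemma points_from_ppoint:
  assumes T1: "t1_space X" and C: "C \<subseteq> Pow (topspace X)" and AC: "A \<in> C" and fA: "finite A"
    and ins: "\<And>a y. a \<in> A \<Longrightarrow> y \<in> topspace X \<Longrightarrow> insert y (A - {a}) \<in> C"
    and PP: "P_point (vietoris_on X C) A"
  shows "\<forall>x\<in>A. P_point X x"
proof
  let ?Z = "vietoris_on X C"
  fix a assume aA: "a \<in> A"
  have AX: "A \<subseteq> topspace X" using C AC by blast
  show "P_point X a" unfolding P_point_def
  proof (intro conjI allI impI)
    show "a \<in> topspace X" using AX aA by blast
    fix H assume HA: "gdelta_in X H \<and> a \<in> H"
    then have aH: "a \<in> H" by simp
    from HA have "\<exists>D. (\<forall>n. openin X (D n)) \<and> (\<forall>n. D(Suc n) \<subseteq> D n) \<and> \<Inter>(range D) = H"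
      using gdelta_in_descending by metis
    then obtain U where U0: "(\<forall>n. openin X (U n)) \<and> (\<forall>n. U(Suc n) \<subseteq> U n) \<and> \<Inter>(range U) = H" ..
    have U: "\<And>n. openin X (U n)" "\<Inter>(range U) = H" using U0 by simp_all
    define V where "V = topspace X - (A - {a})"
    have "closedin X (A - {a})" using T1 fA AX unfolding t1_space_closedin_finite by blast
    then have oV: "openin X V" unfolding V_def by blast
    have aV: "a \<in> V" using AX aA unfolding V_def by blast
    define GG where "GG n = {B\<in>C. B \<inter> (U n \<inter> V) \<noteq> {}}" for n
    have oGG: "openin ?Z (GG n)" for n
      unfolding vietoris_on_def GG_def using U(1)[of n] oV
      by (intro topology_generated_by_Basis) blast
    have "gdelta_in ?Z (\<Inter>(range GG))"
    proof (rule gdelta_in_Inter)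
      show "countable (range GG)" by simp
      show "range GG \<noteq> {}" by simp
      fix S assume "S \<in> range GG" then show "gdelta_in ?Z S" using oGG open_imp_gdelta_in by blast
    qed
    moreover have "A \<in> \<Inter>(range GG)"
      using AC aA aV aH U(2) unfolding GG_def by blast
    ultimately have Aint: "A \<in> ?Z interior_of \<Inter>(range GG)" using PP unfolding P_point_def by blast
    obtain F where F: "finite F" "\<forall>U\<in>F. openin X U"
      "\<forall>B\<in>C. good A F B \<longrightarrow> B \<in> ?Z interior_of \<Inter>(range GG)"
      using open_nbhd[OF openin_interior_of Aint] by blast
    define O1 where "O1 = V \<inter> \<Inter>{W\<in>F. a \<in> W}"
    have oO1: "openin X O1" unfolding O1_def using oV F(1,2) by (intro openin_Int_Inter) auto
    have aO1: "a \<in> O1" unfolding O1_def using aV by blast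
    have "O1 \<subseteq> H"
    proof
      fix y assume yO: "y \<in> O1"
      have yX: "y \<in> topspace X" using yO oO1 openin_subset by blast
      define B where "B = insert y (A - {a})"
      have BC: "B \<in> C" unfolding B_def using ins aA yX by blast
      have "good A F B" unfolding good_def
      proof
        fix W assume W: "W \<in> F"
        show "(A \<subseteq> W \<longrightarrow> B \<subseteq> W) \<and> (A \<inter> W \<noteq> {} \<longrightarrow> B \<inter> W \<noteq> {})"
        proof (intro conjI impI)
          assume "A \<subseteq> W"
          then have "y \<in> W" using aA yO W unfolding O1_def by blast
          then show "B \<subseteq> W" using \<open>A \<subseteq> W\<close> unfolding B_def by blast
        next
          assume "A \<inter> W \<noteq> {}"
          then obtain a' where "a' \<in> A" "a' \<in> W" by blast
          show "B \<inter> W \<noteq> {}"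
          proof (cases "a' = a")
            case True
            then have "y \<in> W" using \<open>a' \<in> W\<close> yO W unfolding O1_def by blast
            then show ?thesis unfolding B_def by blast
          next
            case False
            then show ?thesis using \<open>a' \<in> A\<close> \<open>a' \<in> W\<close> unfolding B_def by blast
          qed
        qed
      qed
      then have "B \<in> ?Z interior_of \<Inter>(range GG)" using F(3) BC by blast
      then have "B \<in> \<Inter>(range GG)" using interior_of_subset[of ?Z "\<Inter>(range GG)"] by (rule subsetD[rotated])
      then have "B \<in> GG n" for n by simp
      then have "B \<inter> (U n \<inter> V) \<noteq> {}" for n unfolding GG_def by simp
      moreover have "B \<inter> V \<subseteq> {y}" unfolding B_def V_def by blast
      ultimately have "y \<in> U n" for n by fastforce
      then show "y \<in> H" using U(2) by blast
    qed
    then show "a \<in> X interior_of H" using oO1 aO1 interior_of_maximal by blast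
  qed
qed

lemma vietoris_char:
  assumes T1: "t1_space X" and C: "C \<subseteq> Pow (topspace X)" and AC: "A \<in> C" and fA: "finite A"
    and ins: "\<And>a y. a \<in> A \<Longrightarrow> y \<in> topspace X \<Longrightarrow> insert y (A - {a}) \<in> C"
  shows "P_point (vietoris_on X C) A \<longleftrightarrow> (\<forall>x\<in>A. P_point X x)"
  using points_from_ppoint[OF assms] ppoint_from_points[OF C AC fA] by blast

theorem proposition2p2:
  fixes X :: "'a topology" and A :: "'a set"
  assumes "Hausdorff_space X"
    and "A \<in> topspace (fin_hyperspace X)"
  shows "(P_point (fin_hyperspace X) A
            \<longleftrightarrow> (\<forall>n::nat. 0 < n \<and> card A \<le> n \<longrightarrow> P_point (fin_hyperspace_n X n) A))
       \<and> (P_point (fin_hyperspace X) A \<longleftrightarrow> (\<forall>x\<in>A. P_point X x))"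
proof -
  have T1: "t1_space X" using assms(1) by (rule Hausdorff_imp_t1_space)
  define CI where "CI = {A. A \<noteq> {} \<and> finite A \<and> A \<subseteq> topspace X}"
  define CN where "CN n = {A. A \<noteq> {} \<and> finite A \<and> card A \<le> n \<and> A \<subseteq> topspace X}" for n
  have CIs: "CI \<subseteq> Pow (topspace X)" unfolding CI_def by blast
  have CNs: "CN n \<subseteq> Pow (topspace X)" for n unfolding CN_def by blast
  have fh: "fin_hyperspace X = vietoris_on X CI" unfolding fin_hyperspace_def CI_def ..
  have fhn: "fin_hyperspace_n X n = vietoris_on X (CN n)" for n unfolding fin_hyperspace_n_def CN_def ..
  have ACI: "A \<in> CI" using assms(2) vietoris_topspace[OF CIs] fh by simp
  then have fA: "finite A" and Ane: "A \<noteq> {}" and AX: "A \<subseteq> topspace X" unfolding CI_def by auto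
  have cardle: "card (insert y (A - {a})) \<le> card A" if "a \<in> A" for a y
  proof -
    have "card (insert y (A - {a})) \<le> Suc (card (A - {a}))" using fA by (simp add: card_insert_if)
    also have "\<dots> = card A" using that fA card_Suc_Diff1 by metis
    finally show ?thesis .
  qed
  have insI: "insert y (A - {a}) \<in> CI" if "a \<in> A" "y \<in> topspace X" for a y
    using that fA AX unfolding CI_def by auto
  have E: "P_point (fin_hyperspace X) A \<longleftrightarrow> (\<forall>x\<in>A. P_point X x)"
    unfolding fh by (rule vietoris_char[OF T1 CIs ACI fA insI])
  have En: "P_point (fin_hyperspace_n X n) A \<longleftrightarrow> (\<forall>x\<in>A. P_point X x)" if "card A \<le> n" for n
  proof -
    have ACN: "A \<in> CN n" using ACI that unfolding CI_def CN_def by auto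
    have insN: "insert y (A - {a}) \<in> CN n" if "a \<in> A" "y \<in> topspace X" for a y
      using that fA AX cardle[OF that(1), of y] \<open>card A \<le> n\<close> unfolding CN_def by auto
    show ?thesis unfolding fhn by (rule vietoris_char[OF T1 CNs ACN fA insN])
  qed
  have cpos: "0 < card A" using fA Ane by (simp add: card_gt_0_iff)
  have "(\<forall>n::nat. 0 < n \<and> card A \<le> n \<longrightarrow> P_point (fin_hyperspace_n X n) A) \<longleftrightarrow> (\<forall>x\<in>A. P_point X x)"
    using En cpos by blast
  then show ?thesis using E by blast
qed

end
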